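(* Let $B\ge 0$, $E>0$ and $L>0$ be constants, and on the domain $\{(r,\theta)\,:\, r>1,\ 0<\theta<\pi\}$ define $$U(r,\theta)=\frac{L^2\Lambda^2}{2r^2\sin^2\theta}-\frac{E^2}{2\Lambda^2\Gamma},\qquad \Lambda=1+\frac{B^2}{4}r^2\sin^2\theta,\qquad \Gamma=1-\frac1r .$$ If $(r_c,\theta_c)$ is a critical point of $U$ in this domain, i.e. $\partial U/\partial r=\partial U/\partial\theta=0$ at $(r_c,\theta_c)$, then $\theta_c=\pi/2$. Consequently every fixed point of the Hamiltonian system with Hamiltonian $$H=\frac{\Gamma}{2\Lambda^2}p_r^2+\frac{p_\theta^2}{2r^2\Lambda^2}+U(r,\theta)$$ on $\{(p_r,p_\theta,r,\theta): r>1,\ 0<\theta<\pi\}$ has $p_r=p_\theta=0$ and $\theta=\pi/2$ (it corresponds to a circular orbit in the equatorial plane).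
   Context: This is the reduced (after elimination of the cyclic coordinates $t,\varphi$) Hamiltonian system for time-like geodesics of neutral particles in the Schwarzschild–Melvin spacetime, in dimensionless units where the horizon is $r=1$; $E$ is the energy, $L$ the angular momentum about the symmetry axis, and $B$ the dimensionless magnetic field parameter. The canonical variables are $(p_r,p_\theta,r,\theta)$ with $\dot r=\partial H/\partial p_r$, $\dot\theta=\partial H/\partial p_\theta$, $\dot p_r=-\partial H/\partial r$, $\dot p_\theta=-\partial H/\partial\theta$. *)

theory Defs
  imports "HOL-Analysis.Analysis"
begin

definition SM_Lambda :: "real \<Rightarrow> real \<Rightarrow> real \<Rightarrow> real" where
  "SM_Lambda B r \<theta> = 1 + (B^2 / 4) * r^2 * (sin \<theta>)^2"

definition SM_Gamma :: "real \<Rightarrow> real" where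
  "SM_Gamma r = 1 - 1 / r"

definition SM_U :: "real \<Rightarrow> real \<Rightarrow> real \<Rightarrow> real \<Rightarrow> real \<Rightarrow> real" where
  "SM_U B E L r \<theta> =
     L^2 * (SM_Lambda B r \<theta>)^2 / (2 * r^2 * (sin \<theta>)^2)
     - E^2 / (2 * (SM_Lambda B r \<theta>)^2 * SM_Gamma r)"

definition SM_H :: "real \<Rightarrow> real \<Rightarrow> real \<Rightarrow> real \<Rightarrow> real \<Rightarrow> real \<Rightarrow> real \<Rightarrow> real" where
  "SM_H B E L pr p\<theta> r \<theta> =
     SM_Gamma r / (2 * (SM_Lambda B r \<theta>)^2) * pr^2
     + p\<theta>^2 / (2 * r^2 * (SM_Lambda B r \<theta>)^2)
     + SM_U B E L r \<theta>"

end

theory Submission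
  imports Defs
begin

definition Gu :: "real \<Rightarrow> real \<Rightarrow> real \<Rightarrow> real \<Rightarrow> real \<Rightarrow> real" where
  "Gu k L E g u = L^2*(k*u - 1)*(1+k*u)/(2*u^2) + E^2*k/((1+k*u)^3*g)"

lemma dPhi:
  fixes k L E g u :: real
  assumes "u > 0" "1 + k*u > 0" "g > 0"
  shows "((\<lambda>u. L^2*(1+k*u)^2/(2*u) - E^2/(2*(1+k*u)^2*g)) has_real_derivative
     Gu k L E g u) (at u)"
  using assms unfolding Gu_def
  apply -
  apply (rule derivative_eq_intros refl | (simp; fail))+
  apply (simp add: field_simps)
  apply algebra
  done

lemma dr1:
  fixes k L s r :: real
  assumes "s > 0" "r > 1" "k \<ge> 0"
  shows "((\<lambda>r. L^2*(1+k*r^2 * s^2)^2/(2*r^2 * s^2)) has_real_derivative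
     (L^2*(k*(r^2 * s^2) - 1)*(1+k*(r^2 * s^2))/(2*(r^2 * s^2)^2) * (2*r * s^2))) (at r)"
  using assms
  apply -
  apply (rule derivative_eq_intros refl | (simp; fail))+
  apply (simp add: field_simps)
  apply algebra
  done

lemma dr2:
  fixes k E s r :: real
  assumes "s > 0" "r > 1" "k \<ge> 0"
  shows "((\<lambda>r. - (E^2/(2*(1+k*r^2 * s^2)^2*(1-1/r)))) has_real_derivative
     (E^2*k/((1+k*(r^2 * s^2))^3*(1-1/r)) * (2*r * s^2) + E^2/(2*(1+k*r^2 * s^2)^2*(1-1/r)^2*r^2))) (at r)"
proof -
  have a: "1+k*r^2 * s^2 > 0" using assms by (simp add: add_pos_nonneg)
  have a': "1+k*r^2 * s^2 \<noteq> 0" using a by simp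
  have c: "r - 1 > 0" using assms by simp
  have c': "r - 1 \<noteq> 0" using assms by simp
  define Q where "Q = 1+k*r^2 * s^2"
  have d0: "((\<lambda>x. - (E^2 * x/(2*(1+k*x^2 * s^2)^2*(x - 1)))) has_real_derivative
     (E^2*k*r/((1+k*r^2 * s^2)^3*(r-1)) * (2*r * s^2) + E^2/(2*(1+k*r^2 * s^2)^2*(r-1)^2))) (at r)"
    using a' c'
    apply -
    apply (rule derivative_eq_intros refl | (simp; fail))+
    unfolding Q_def[symmetric]
    apply (simp add: divide_simps)
    apply (simp only: Q_def)
    apply algebra
    done
  have d: "((\<lambda>x. - (E^2 * x/(2*(1+k*x^2 * s^2)^2*(x - 1)))) has_real_derivative
     (E^2*k/((1+k*(r^2 * s^2))^3*(1-1/r)) * (2*r * s^2) + E^2/(2*(1+k*r^2 * s^2)^2*(1-1/r)^2*r^2))) (at r)"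
    apply (rule DERIV_cong[OF d0])
    using assms a c by (simp add: field_simps)
  show ?thesis
    by (rule has_field_derivative_transform_within_open[OF d, of "{0<..}"]) (use assms in \<open>auto simp: field_simps\<close>)
qed

lemma dU_theta:
  assumes "r > 1" "0 < t" "t < pi"
  shows "((\<lambda>x. SM_U B E L r x) has_real_derivative
     Gu (B^2/4) L E (SM_Gamma r) (r^2*(sin t)^2) * (r^2 * (2 * sin t * cos t))) (at t)"
proof -
  have s: "sin t > 0" using assms sin_gt_zero by auto
  have g: "SM_Gamma r > 0" using assms by (simp add: SM_Gamma_def)
  have u: "r^2*(sin t)^2 > 0" using s assms by simp
  have k: "1 + B^2/4 * (r^2*(sin t)^2) > 0" using u by (simp add: add_pos_nonneg)
  have eq: "(\<lambda>x. SM_U B E L r x) = (\<lambda>x. (\<lambda>u. L^2*(1+B^2/4*u)^2/(2*u) - E^2/(2*(1+B^2/4*u)^2*SM_Gamma r)) (r^2*(sin x)^2))"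
    by (rule ext) (simp add: SM_U_def SM_Lambda_def mult.assoc)
  have du: "((\<lambda>x. r^2*(sin x)^2) has_real_derivative (r^2 * (2 * sin t * cos t))) (at t)"
    by (rule derivative_eq_intros refl | simp)+
  show ?thesis
    unfolding eq by (rule DERIV_chain2[OF dPhi[OF u k g] du])
qed

lemma dU_r:
  assumes "r > 1" "0 < t" "t < pi" "B \<ge> 0"
  shows "((\<lambda>x. SM_U B E L x t) has_real_derivative
     Gu (B^2/4) L E (SM_Gamma r) (r^2*(sin t)^2) * (2*r*(sin t)^2)
     + E^2/(2*(1+B^2/4*r^2*(sin t)^2)^2*(1-1/r)^2*r^2)) (at r)"
proof -
  have s: "sin t > 0" using assms sin_gt_zero by auto
  have eq: "(\<lambda>x. SM_U B E L x t) = (\<lambda>x. L^2*(1+B^2/4*x^2 * (sin t)^2)^2/(2*x^2 * (sin t)^2)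
       + - (E^2/(2*(1+B^2/4*x^2 * (sin t)^2)^2*(1-1/x))))"
    by (rule ext) (simp add: SM_U_def SM_Lambda_def SM_Gamma_def)
  have k: "B^2/4 \<ge> (0::real)" by simp
  have d: "((\<lambda>x. SM_U B E L x t) has_real_derivative
     (L^2*(B^2/4*(r^2 * (sin t)^2) - 1)*(1+B^2/4*(r^2 * (sin t)^2))/(2*(r^2 * (sin t)^2)^2) * (2*r * (sin t)^2))
     + (E^2*(B^2/4)/((1+B^2/4*(r^2 * (sin t)^2))^3*(1-1/r)) * (2*r * (sin t)^2) + E^2/(2*(1+B^2/4*r^2 * (sin t)^2)^2*(1-1/r)^2*r^2))) (at r)"
    unfolding eq
    by (rule DERIV_add[OF dr1[OF s assms(1) k] dr2[OF s assms(1) k]])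
  show ?thesis
    apply (rule DERIV_cong[OF d])
    unfolding Gu_def SM_Gamma_def by (simp add: algebra_simps)
qed

lemma dq1:
  fixes a b u x0 :: real
  shows "((\<lambda>x. a * x^2 + b + u) has_real_derivative (a * (2 * x0))) (at x0)"
  by (rule derivative_eq_intros refl | simp)+

lemma dq2:
  fixes a c u x0 :: real
  shows "((\<lambda>x. a + x^2 / c + u) has_real_derivative ((2 * x0) / c)) (at x0)"
proof -
  have "(\<lambda>x. a + x^2 / c + u) = (\<lambda>x. (1/c) * x^2 + a + u)" by (auto simp: field_simps)
  then show ?thesis using dq1[of "1/c" a u x0] by simp
qed

lemma part1:
  fixes B E L :: real
  assumes "B \<ge> 0" and "E > 0" and "L > 0"
    and "rc > 1" "0 < tc" "tc < pi"
    and d1: "((\<lambda>r. SM_U B E L r tc) has_real_derivative 0) (at rc)"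
    and d2: "((\<lambda>t. SM_U B E L rc t) has_real_derivative 0) (at tc)"
  shows "tc = pi / 2"
proof -
  have s: "sin tc > 0" using assms sin_gt_zero by auto
  define G where "G = Gu (B^2/4) L E (SM_Gamma rc) (rc^2*(sin tc)^2)"
  have e1: "G * (rc^2 * (2 * sin tc * cos tc)) = 0"
    using DERIV_unique[OF dU_theta[OF assms(4,5,6), of B E L] d2] unfolding G_def .
  have e2: "G * (2*rc*(sin tc)^2) + E^2/(2*(1+B^2/4*rc^2*(sin tc)^2)^2*(1-1/rc)^2*rc^2) = 0"
    using DERIV_unique[OF dU_r[OF assms(4,5,6) assms(1), of E L] d1] unfolding G_def .
  have pos: "E^2/(2*(1+B^2/4*rc^2*(sin tc)^2)^2*(1-1/rc)^2*rc^2) > 0"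
  proof -
    have "1+B^2/4*rc^2*(sin tc)^2 > 0" by (simp add: add_pos_nonneg)
    moreover have "1 - 1/rc > 0" using assms by simp
    ultimately show ?thesis using assms by (intro divide_pos_pos) auto
  qed
  have "cos tc = 0"
  proof (rule ccontr)
    assume "cos tc \<noteq> 0"
    then have X: "rc^2 * (2 * sin tc * cos tc) \<noteq> 0" using s assms(4) by simp
    have G0: "G = 0" by (metis e1 X mult_eq_0_iff)
    have "E^2/(2*(1+B^2/4*rc^2*(sin tc)^2)^2*(1-1/rc)^2*rc^2) = 0"
      using e2 unfolding G0 by (simp only: mult_zero_left add_0_left)
    then show False using pos by (metis less_irrefl)
  qed
  then have cc: "cos tc = cos (pi/2)" by simp
  show ?thesis by (rule cos_inj_pi[OF _ _ _ _ cc]) (use assms(5,6) in auto)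
qed

theorem mainTheorem1:
  fixes B E L :: real
  assumes "B \<ge> 0" and "E > 0" and "L > 0"
  shows "(\<forall>rc \<theta>c. rc > 1 \<and> 0 < \<theta>c \<and> \<theta>c < pi
            \<and> ((\<lambda>r. SM_U B E L r \<theta>c) has_real_derivative 0) (at rc)
            \<and> ((\<lambda>\<theta>. SM_U B E L rc \<theta>) has_real_derivative 0) (at \<theta>c)
            \<longrightarrow> \<theta>c = pi / 2)
       \<and> (\<forall>pr p\<theta> r \<theta>. r > 1 \<and> 0 < \<theta> \<and> \<theta> < pi
            \<and> ((\<lambda>x. SM_H B E L x p\<theta> r \<theta>) has_real_derivative 0) (at pr)
            \<and> ((\<lambda>x. SM_H B E L pr x r \<theta>) has_real_derivative 0) (at p\<theta>)
            \<and> ((\<lambda>x. SM_H B E L pr p\<theta> x \<theta>) has_real_derivative 0) (at r)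
            \<and> ((\<lambda>x. SM_H B E L pr p\<theta> r x) has_real_derivative 0) (at \<theta>)
            \<longrightarrow> pr = 0 \<and> p\<theta> = 0 \<and> \<theta> = pi / 2)"
proof (rule conjI; intro allI impI)
  fix rc tc assume h: "rc > 1 \<and> 0 < tc \<and> tc < pi
            \<and> ((\<lambda>r. SM_U B E L r tc) has_real_derivative 0) (at rc)
            \<and> ((\<lambda>\<theta>. SM_U B E L rc \<theta>) has_real_derivative 0) (at tc)"
  then show "tc = pi / 2" using part1[OF assms] by blast
next
  fix pr pt r t assume h: "r > 1 \<and> 0 < t \<and> t < pi
            \<and> ((\<lambda>x. SM_H B E L x pt r t) has_real_derivative 0) (at pr)
            \<and> ((\<lambda>x. SM_H B E L pr x r t) has_real_derivative 0) (at pt)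
            \<and> ((\<lambda>x. SM_H B E L pr pt x t) has_real_derivative 0) (at r)
            \<and> ((\<lambda>x. SM_H B E L pr pt r x) has_real_derivative 0) (at t)"
  have lam: "SM_Lambda B r t > 0" unfolding SM_Lambda_def by (simp add: add_pos_nonneg)
  have gam: "SM_Gamma r > 0" using h by (simp add: SM_Gamma_def)
  have rp: "r > 0" using h by simp
  have dpr: "((\<lambda>x. SM_H B E L x pt r t) has_real_derivative
       (SM_Gamma r / (2 * (SM_Lambda B r t)^2) * (2 * pr))) (at pr)"
    unfolding SM_H_def by (rule dq1)
  have dpt: "((\<lambda>x. SM_H B E L pr x r t) has_real_derivative
       ((2 * pt) / (2 * r^2 * (SM_Lambda B r t)^2))) (at pt)"
    unfolding SM_H_def by (rule dq2)
  have "SM_Gamma r / (2 * (SM_Lambda B r t)^2) * (2 * pr) = 0"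
    using DERIV_unique[OF dpr] h by blast
  then have p1: "pr = 0" using lam gam by simp
  have "(2 * pt) / (2 * r^2 * (SM_Lambda B r t)^2) = 0"
    using DERIV_unique[OF dpt] h by blast
  then have p2: "pt = 0" using lam rp by simp
  have e1: "(\<lambda>x. SM_H B E L pr pt x t) = (\<lambda>x. SM_U B E L x t)"
    by (rule ext) (simp add: SM_H_def p1 p2)
  have e2: "(\<lambda>x. SM_H B E L pr pt r x) = (\<lambda>x. SM_U B E L r x)"
    by (rule ext) (simp add: SM_H_def p1 p2)
  have "t = pi / 2"
  proof -
    have d3: "((\<lambda>x. SM_U B E L x t) has_real_derivative 0) (at r)"
      by (subst e1[symmetric]) (use h in blast)
    have d4: "((\<lambda>x. SM_U B E L r x) has_real_derivative 0) (at t)"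
      by (subst e2[symmetric]) (use h in blast)
    show ?thesis using part1[OF assms _ _ _ d3 d4] h by blast
  qed
  then show "pr = 0 \<and> pt = 0 \<and> t = pi / 2" using p1 p2 by simp
qed

end
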